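(* Assume every vertex of $T$ has at least two successors and that $\nu$ is a doubling measure on $(\partial T,\rho)$. Let $\alpha>0$ and $\delta>0$, and let $K:T\times\partial T\to\mathbb C$ satisfy $$|K(x,\omega)|\le\frac{m_\nu(x)^\alpha}{m_\nu(\omega\wedge x)^{\alpha+1}}\min\Big\{\frac{1}{m_\nu(\omega\wedge x)},\,m_\nu(\omega\wedge x)\Big\}^{1+\delta}\qquad\forall x\in T,\ \omega\in\partial T.$$ Then $K$ satisfies (A3) with exponent $\alpha$, there is $C<\infty$ (depending on $\alpha,\delta$ and $\nu$ but not on $\omega$) with $\sum_{x\in T}|K(x,\omega)|m_\nu(x)\le C$ for all $\omega\in\partial T$ (so (A2) holds), and for every $x\in T$ the function $\omega\mapsto K(x,\omega)$ is $\nu$-integrable on $\partial T$. Moreover, there exist kernels $K$ satisfying this bound which also satisfy $\int_{\partial T}K(x,\omega)\,d\nu(\omega)=0$ for all $x\in T$; hence such kernels define operators in the class $\mathcal O$.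
   Context: Let $T$ be a tree, identified with its vertex set, with graph distance $d$; $x\sim y$ means $d(x,y)=1$. Let $\Omega$ be the boundary (space of ends) of $T$; fix $\omega_*\in\Omega$ and set $\partial T=\Omega\setminus\{\omega_*\}$. For $x\in T$, $[x,\omega_* )$ is the geodesic ray from $x$ to $\omega_*$; for $\omega\in\partial T$, $(\omega,\omega_* )$ is the doubly infinite geodesic joining $\omega$ and $\omega_*$. For $y\in T$ write $x\le y$ if either $x\in T$ and $y\in[x,\omega_* )$, or $x\in\partial T$ and $y\in(x,\omega_* )$. Fix $o\in T$ and let $(x_j)_{j\ge0}$ enumerate $[o,\omega_* )$ with $x_0=o$, $x_j\sim x_{j+1}$; the level is $\ell(x)=\lim_{j\to\infty}(j-d(x,x_j))$. Successors: $s(x)=\{y\sim x:\ell(y)=\ell(x)-1\}$. The confluent $\eta\wedge\zeta$ of $\eta,\zeta\in T\cup\partial T$ is the vertex of minimal level among $x\in T$ with $\eta\le x$, $\zeta\le x$. $\partial T_x=\{\omega\in\partial T:\omega\le x\}$. Gromov distance: $\rho(\eta,\xi)=e^{\ell(\eta\wedge\xi)}$ for $\eta\ne\xi$, $\rho(\eta,\eta)=0$. $\nu$ is a positive Borel measure on $\partial T$ with $0<\nu(\partial T_x)<\infty$; doubling means $\nu(B_\rho(\omega,2r))\le C\nu(B_\rho(\omega,r))$ for all $\omega,r$. $m_\nu(x)=\nu(\partial T_x)$. The class $\mathcal O$ consists of integral operators $\mathcal Kg(x)=\int_{\partial T}K(x,\omega)g(\omega)\,d\nu(\omega)$ whose kernel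 $K:T\times\partial T\to\mathbb C$ satisfies: (A1) for every $x_0\in T$, $\omega\mapsto K(x_0,\omega)$ is $\nu$-integrable and $\int_{\partial T}K(x_0,\omega)\,d\nu(\omega)=0$; (A2) $C_K:=\operatorname{ess\,sup}_{\omega\in\partial T}\sum_{x\in T}|K(x,\omega)|m_\nu(x)<\infty$; (A3) there is $\alpha>0$ with $|K(x,\omega)|\le m_\nu(x)^\alpha/m_\nu(x\wedge\omega)^{\alpha+1}$ for all $x\in T$, $\omega\in\partial T$. *)

theory Defs
  imports "HOL-Analysis.Analysis"
begin

text \<open>A tree with a distinguished end \<open>\<omega>_*\<close> is encoded by its "parent" map:
  \<open>par x\<close> is the neighbour of \<open>x\<close> on the ray \<open>[x,\<omega>_*)\<close>. The vertex set is the whole type.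
  Adjacency is \<open>x \<sim> y \<longleftrightarrow> par x = y \<or> par y = x\<close>.\<close>

definition tree_with_end :: "('v \<Rightarrow> 'v) \<Rightarrow> bool" where
  "tree_with_end par \<longleftrightarrow>
     (\<forall>x y. \<exists>m n. (par ^^ m) x = (par ^^ n) y) \<and>
     (\<forall>x n. (par ^^ n) x = x \<longrightarrow> n = 0)"

definition above :: "('v \<Rightarrow> 'v) \<Rightarrow> 'v \<Rightarrow> 'v set" where
  "above par x = {(par ^^ n) x | n. True}"

definition successors :: "('v \<Rightarrow> 'v) \<Rightarrow> 'v \<Rightarrow> 'v set" where
  "successors par x = {y. par y = x}"

text \<open>Level w.r.t. base point \<open>r0\<close> (the vertex \<open>o\<close> of the paper).\<close>
definition level :: "('v \<Rightarrow> 'v) \<Rightarrow> 'v \<Rightarrow> 'v \<Rightarrow> int" where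
  "level par r0 x = (THE k. \<exists>m n. (par ^^ m) x = (par ^^ n) r0 \<and> k = int n - int m)"

text \<open>A boundary point \<open>\<omega> \<in> \<partial>T\<close> is represented by the doubly infinite geodesic
  \<open>(\<omega>,\<omega>_*)\<close>, listed by level: \<open>\<omega> k\<close> is its vertex at level \<open>k\<close>.\<close>
definition bdry :: "('v \<Rightarrow> 'v) \<Rightarrow> 'v \<Rightarrow> (int \<Rightarrow> 'v) set" where
  "bdry par r0 = {\<omega>. \<forall>k. level par r0 (\<omega> k) = k \<and> par (\<omega> k) = \<omega> (k + 1)}"

definition conf :: "('v \<Rightarrow> 'v) \<Rightarrow> 'v \<Rightarrow> 'v set \<Rightarrow> 'v set \<Rightarrow> 'v" where
  "conf par r0 U V = (THE y. y \<in> U \<inter> V \<and> (\<forall>z \<in> U \<inter> V. level par r0 y \<le> level par r0 z))"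

definition conf_vb :: "('v \<Rightarrow> 'v) \<Rightarrow> 'v \<Rightarrow> 'v \<Rightarrow> (int \<Rightarrow> 'v) \<Rightarrow> 'v" where
  "conf_vb par r0 x \<omega> = conf par r0 (above par x) (range \<omega>)"

definition conf_bb :: "('v \<Rightarrow> 'v) \<Rightarrow> 'v \<Rightarrow> (int \<Rightarrow> 'v) \<Rightarrow> (int \<Rightarrow> 'v) \<Rightarrow> 'v" where
  "conf_bb par r0 \<omega> \<xi> = conf par r0 (range \<omega>) (range \<xi>)"

definition gromov :: "('v \<Rightarrow> 'v) \<Rightarrow> 'v \<Rightarrow> (int \<Rightarrow> 'v) \<Rightarrow> (int \<Rightarrow> 'v) \<Rightarrow> real" where
  "gromov par r0 \<omega> \<xi> = (if \<omega> = \<xi> then 0 else exp (real_of_int (level par r0 (conf_bb par r0 \<omega> \<xi>))))"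

definition rho_ball :: "('v \<Rightarrow> 'v) \<Rightarrow> 'v \<Rightarrow> (int \<Rightarrow> 'v) \<Rightarrow> real \<Rightarrow> (int \<Rightarrow> 'v) set" where
  "rho_ball par r0 \<omega> r = {\<eta> \<in> bdry par r0. gromov par r0 \<omega> \<eta> < r}"

definition rho_open :: "('v \<Rightarrow> 'v) \<Rightarrow> 'v \<Rightarrow> (int \<Rightarrow> 'v) set \<Rightarrow> bool" where
  "rho_open par r0 U \<longleftrightarrow> U \<subseteq> bdry par r0 \<and> (\<forall>\<omega>\<in>U. \<exists>r>0. rho_ball par r0 \<omega> r \<subseteq> U)"

definition borel_on_bdry :: "('v \<Rightarrow> 'v) \<Rightarrow> 'v \<Rightarrow> (int \<Rightarrow> 'v) measure \<Rightarrow> bool" where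
  "borel_on_bdry par r0 \<nu> \<longleftrightarrow> space \<nu> = bdry par r0 \<and>
     sets \<nu> = sigma_sets (bdry par r0) {U. rho_open par r0 U}"

definition cyl :: "('v \<Rightarrow> 'v) \<Rightarrow> 'v \<Rightarrow> 'v \<Rightarrow> (int \<Rightarrow> 'v) set" where
  "cyl par r0 x = {\<omega> \<in> bdry par r0. x \<in> range \<omega>}"

definition m_nu :: "('v \<Rightarrow> 'v) \<Rightarrow> 'v \<Rightarrow> (int \<Rightarrow> 'v) measure \<Rightarrow> 'v \<Rightarrow> real" where
  "m_nu par r0 \<nu> x = measure \<nu> (cyl par r0 x)"

definition doubling :: "('v \<Rightarrow> 'v) \<Rightarrow> 'v \<Rightarrow> (int \<Rightarrow> 'v) measure \<Rightarrow> bool" where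
  "doubling par r0 \<nu> \<longleftrightarrow> (\<exists>C::real. \<forall>\<omega>\<in>bdry par r0. \<forall>r. 
      emeasure \<nu> (rho_ball par r0 \<omega> (2 * r)) \<le> ennreal C * emeasure \<nu> (rho_ball par r0 \<omega> r))"

definition cond_A1 :: "('v \<Rightarrow> 'v) \<Rightarrow> 'v \<Rightarrow> (int \<Rightarrow> 'v) measure \<Rightarrow> ('v \<Rightarrow> (int \<Rightarrow> 'v) \<Rightarrow> complex) \<Rightarrow> bool" where
  "cond_A1 par r0 \<nu> K \<longleftrightarrow> (\<forall>x. integrable \<nu> (K x) \<and> (\<integral>\<omega>. K x \<omega> \<partial>\<nu>) = 0)"

definition cond_A2 :: "('v \<Rightarrow> 'v) \<Rightarrow> 'v \<Rightarrow> (int \<Rightarrow> 'v) measure \<Rightarrow> ('v \<Rightarrow> (int \<Rightarrow> 'v) \<Rightarrow> complex) \<Rightarrow> bool" where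
  "cond_A2 par r0 \<nu> K \<longleftrightarrow> (\<exists>C::real. AE \<omega> in \<nu>.
      (\<lambda>x. cmod (K x \<omega>) * m_nu par r0 \<nu> x) summable_on UNIV \<and>
      (\<Sum>\<^sub>\<infinity>x. cmod (K x \<omega>) * m_nu par r0 \<nu> x) \<le> C)"

definition cond_A3_with :: "('v \<Rightarrow> 'v) \<Rightarrow> 'v \<Rightarrow> (int \<Rightarrow> 'v) measure \<Rightarrow> real \<Rightarrow> ('v \<Rightarrow> (int \<Rightarrow> 'v) \<Rightarrow> complex) \<Rightarrow> bool" where
  "cond_A3_with par r0 \<nu> \<alpha> K \<longleftrightarrow> (\<forall>x. \<forall>\<omega>\<in>bdry par r0.
      cmod (K x \<omega>) \<le> m_nu par r0 \<nu> x powr \<alpha> / m_nu par r0 \<nu> (conf_vb par r0 x \<omega>) powr (\<alpha> + 1))"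

definition class_O :: "('v \<Rightarrow> 'v) \<Rightarrow> 'v \<Rightarrow> (int \<Rightarrow> 'v) measure \<Rightarrow> ('v \<Rightarrow> (int \<Rightarrow> 'v) \<Rightarrow> complex) \<Rightarrow> bool" where
  "class_O par r0 \<nu> K \<longleftrightarrow> cond_A1 par r0 \<nu> K \<and> cond_A2 par r0 \<nu> K \<and> (\<exists>\<alpha>>0. cond_A3_with par r0 \<nu> \<alpha> K)"

definition strong_bound :: "('v \<Rightarrow> 'v) \<Rightarrow> 'v \<Rightarrow> (int \<Rightarrow> 'v) measure \<Rightarrow> real \<Rightarrow> real \<Rightarrow> ('v \<Rightarrow> (int \<Rightarrow> 'v) \<Rightarrow> complex) \<Rightarrow> bool" where
  "strong_bound par r0 \<nu> \<alpha> \<delta> K \<longleftrightarrow> (\<forall>x. \<forall>\<omega>\<in>bdry par r0.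
      cmod (K x \<omega>) \<le> m_nu par r0 \<nu> x powr \<alpha> / m_nu par r0 \<nu> (conf_vb par r0 x \<omega>) powr (\<alpha> + 1)
        * (min (1 / m_nu par r0 \<nu> (conf_vb par r0 x \<omega>)) (m_nu par r0 \<nu> (conf_vb par r0 x \<omega>))) powr (1 + \<delta>))"

end

theory Submission
  imports Defs
begin

locale tw = fixes par :: "'v \<Rightarrow> 'v" and r0 :: 'v assumes tree: "tree_with_end par"
begin

lemma meet: "\<exists>m n. (par ^^ m) x = (par ^^ n) y"
  using tree unfolding tree_with_end_def by blast

lemma nocyc: "(par ^^ n) x = x \<Longrightarrow> n = 0"
  using tree unfolding tree_with_end_def by blast

lemma pow_add: "(par ^^ (m + n)) x = (par ^^ m) ((par ^^ n) x)"
  by (simp add: funpow_add)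

lemma pow_inj: assumes "(par ^^ a) x = (par ^^ b) x" shows "a = b"
proof (rule ccontr)
  assume ne: "a \<noteq> b"
  have H: False if ab: "a < b" "(par ^^ a) x = (par ^^ b) x" for a b
  proof -
    have "(par ^^ (b - a)) ((par ^^ a) x) = (par ^^ a) x"
      using pow_add[of "b-a" a x] ab by simp
    then have "b - a = 0" by (rule nocyc)
    then show False using ab by simp
  qed
  have "a < b \<or> b < a" using ne by arith
  then show False using H[of a b] H[of b a] assms by auto
qed

lemma level_eq: assumes "(par ^^ m) x = (par ^^ n) r0" shows "level par r0 x = int n - int m"
  unfolding level_def
proof (rule the_equality)
  show "\<exists>m' n'. (par ^^ m') x = (par ^^ n') r0 \<and> int n - int m = int n' - int m'"
    using assms by blast
next
  fix k assume "\<exists>m' n'. (par ^^ m') x = (par ^^ n') r0 \<and> k = int n' - int m'"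
  then obtain m' n' where h: "(par ^^ m') x = (par ^^ n') r0" "k = int n' - int m'" by blast
  { fix m n m' n' assume le: "m \<le> m'" and h1: "(par ^^ m) x = (par ^^ n) r0"
       and h2: "(par ^^ m') x = (par ^^ n') r0"
    have "(par ^^ m') x = (par ^^ (m' - m)) ((par ^^ m) x)" using pow_add[of "m'-m" m x] le by simp
    also have "\<dots> = (par ^^ (m' - m + n)) r0" using h1 pow_add[of "m'-m" n r0] by simp
    finally have "(par ^^ (m' - m + n)) r0 = (par ^^ n') r0" using h2 by simp
    then have "m' - m + n = n'" by (rule pow_inj)
    then have "int n' - int m' = int n - int m" using le by linarith }
  note * = this
  show "k = int n - int m"
  proof (cases "m \<le> m'")
    case True then show ?thesis using *[OF True assms h(1)] h(2) by simp
  next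
    case False then show ?thesis using *[of m' m n' n] assms h by simp
  qed
qed

lemma level_par: "level par r0 (par x) = level par r0 x + 1"
proof -
  obtain m n where h: "(par ^^ m) x = (par ^^ n) r0" using meet by blast
  show ?thesis
  proof (cases m)
    case 0
    then have e: "(par ^^ 0) (par x) = (par ^^ Suc n) r0" using h by simp
    show ?thesis using level_eq[OF e] level_eq[OF h] 0 by simp
  next
    case (Suc k)
    then have e: "(par ^^ k) (par x) = (par ^^ n) r0" using h by (simp add: funpow_swap1)
    show ?thesis using level_eq[OF e] level_eq[OF h] Suc by simp
  qed
qed

lemma level_pow: "level par r0 ((par ^^ n) x) = level par r0 x + int n"
  by (induction n) (auto simp: level_par)

lemma above_iff: "y \<in> above par x \<longleftrightarrow> (\<exists>n. y = (par ^^ n) x)"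
  unfolding above_def by auto

lemma above_pow: assumes "y \<in> above par x"
  shows "level par r0 x \<le> level par r0 y \<and> y = (par ^^ nat (level par r0 y - level par r0 x)) x"
proof -
  obtain n where n: "y = (par ^^ n) x" using assms unfolding above_iff by blast
  then have "level par r0 y = level par r0 x + int n" by (simp add: level_pow)
  then show ?thesis using n by simp
qed

lemma bdry_level: "\<omega> \<in> bdry par r0 \<Longrightarrow> level par r0 (\<omega> k) = k"
  by (simp add: bdry_def)

lemma bdry_par: "\<omega> \<in> bdry par r0 \<Longrightarrow> par (\<omega> k) = \<omega> (k + 1)"
  by (simp add: bdry_def)

lemma bdry_shift: assumes "\<omega> \<in> bdry par r0" shows "\<omega> (k + int n) = (par ^^ n) (\<omega> k)"
proof (induction n)
  case (Suc n)
  have "\<omega> (k + int (Suc n)) = \<omega> ((k + int n) + 1)" by (simp add: ac_simps)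
  also have "\<dots> = par (\<omega> (k + int n))" using bdry_par[OF assms] by simp
  finally show ?case using Suc by simp
qed simp

lemma bdry_range: assumes "\<omega> \<in> bdry par r0" shows "v \<in> range \<omega> \<longleftrightarrow> \<omega> (level par r0 v) = v"
proof
  assume "v \<in> range \<omega>" then obtain k where "v = \<omega> k" by blast
  then show "\<omega> (level par r0 v) = v" by (simp add: bdry_level[OF assms])
next
  assume "\<omega> (level par r0 v) = v" then show "v \<in> range \<omega>" using range_eqI[of v \<omega> "level par r0 v"] by simp
qed

lemma bdry_up: assumes "\<omega> \<in> bdry par r0" "\<eta> \<in> bdry par r0" "\<omega> k = \<eta> k" "k \<le> k'"
  shows "\<omega> k' = \<eta> k'"
proof -
  have e: "k' = k + int (nat (k' - k))" using assms by simp
  have "\<omega> (k + int (nat (k' - k))) = \<eta> (k + int (nat (k' - k)))"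
    unfolding bdry_shift[OF assms(1)] bdry_shift[OF assms(2)] assms(3) ..
  then show ?thesis using e by simp
qed

lemma bdry_meet: assumes "\<omega> \<in> bdry par r0" "\<eta> \<in> bdry par r0" shows "\<exists>k. \<omega> k = \<eta> k"
proof -
  obtain m n where h: "(par ^^ m) (\<omega> 0) = (par ^^ n) (\<eta> 0)" using meet by blast
  then have "\<omega> (int m) = \<eta> (int n)" using bdry_shift[OF assms(1), of 0 m] bdry_shift[OF assms(2), of 0 n] by simp
  moreover have "int m = int n" using bdry_level[OF assms(1), of "int m"] bdry_level[OF assms(2), of "int n"] calculation by simp
  ultimately show ?thesis by auto
qed

lemma bdry_meet_above: assumes "\<omega> \<in> bdry par r0" shows "\<exists>k. \<omega> k \<in> above par x"
proof -
  obtain m n where h: "(par ^^ m) x = (par ^^ n) (\<omega> 0)" using meet by blast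
  then have "\<omega> (int n) = (par ^^ m) x" using bdry_shift[OF assms(1), of 0 n] by simp
  then show ?thesis unfolding above_iff by blast
qed

lemma conf_eq: assumes "y \<in> U \<inter> V" "\<forall>z\<in>U \<inter> V. level par r0 y \<le> level par r0 z"
  "\<forall>z1\<in>U \<inter> V. \<forall>z2\<in>U\<inter>V. level par r0 z1 = level par r0 z2 \<longrightarrow> z1 = z2"
shows "conf par r0 U V = y"
  unfolding conf_def
proof (rule the_equality)
  show "y \<in> U \<inter> V \<and> (\<forall>z\<in>U \<inter> V. level par r0 y \<le> level par r0 z)" using assms by blast
next
  fix y' assume "y' \<in> U \<inter> V \<and> (\<forall>z\<in>U \<inter> V. level par r0 y' \<le> level par r0 z)"
  then show "y' = y" using assms by (meson antisym)
qed

lemma conf_vb_char: assumes "\<omega> \<in> bdry par r0"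
  shows "\<exists>k0. conf_vb par r0 x \<omega> = \<omega> k0 \<and> \<omega> k0 \<in> above par x \<and> (\<forall>k. \<omega> k \<in> above par x \<longrightarrow> k0 \<le> k)"
proof -
  obtain k where k: "\<omega> k \<in> above par x" using bdry_meet_above[OF assms] by blast
  have lb: "\<omega> k \<in> above par x \<Longrightarrow> level par r0 x \<le> k" for k
    using above_pow[of "\<omega> k" x] bdry_level[OF assms] by simp
  obtain k0 where k0: "\<omega> k0 \<in> above par x" "\<forall>k. \<omega> k \<in> above par x \<longrightarrow> nat (k0 - level par r0 x) \<le> nat (k - level par r0 x)"
    using ex_has_least_nat[of "\<lambda>k. \<omega> k \<in> above par x", OF k, of "\<lambda>k. nat (k - level par r0 x)"] by blast
  have min: "\<forall>k. \<omega> k \<in> above par x \<longrightarrow> k0 \<le> k"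
  proof (intro allI impI)
    fix k assume a: "\<omega> k \<in> above par x"
    have "nat (k0 - level par r0 x) \<le> nat (k - level par r0 x)" using k0(2) a by blast
    moreover have "level par r0 x \<le> k" "level par r0 x \<le> k0" using lb a k0(1) by auto
    ultimately show "k0 \<le> k" by linarith
  qed
  have "conf par r0 (above par x) (range \<omega>) = \<omega> k0"
    apply (rule conf_eq)
    using k0(1) min bdry_level[OF assms] by auto
  then show ?thesis using k0(1) min unfolding conf_vb_def by blast
qed

lemma conf_bb_char: assumes "\<omega> \<in> bdry par r0" "\<eta> \<in> bdry par r0" "\<omega> \<noteq> \<eta>"
  shows "\<exists>k0. conf_bb par r0 \<omega> \<eta> = \<omega> k0 \<and> level par r0 (\<omega> k0) = k0 \<and> (\<forall>k. \<omega> k = \<eta> k \<longleftrightarrow> k0 \<le> k)"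
proof -
  obtain k where k: "\<omega> k = \<eta> k" using bdry_meet[OF assms(1,2)] by blast
  obtain k1 where k1: "\<omega> k1 \<noteq> \<eta> k1" using assms(3) by blast
  have lb: "\<omega> k = \<eta> k \<Longrightarrow> k1 < k" for k
    using bdry_up[OF assms(1,2), of k k1] k1 by force
  obtain k0 where k0: "\<omega> k0 = \<eta> k0" "\<forall>k. \<omega> k = \<eta> k \<longrightarrow> nat (k0 - k1) \<le> nat (k - k1)"
    using ex_has_least_nat[of "\<lambda>k. \<omega> k = \<eta> k", OF k, of "\<lambda>k. nat (k - k1)"] by blast
  have min: "\<forall>k. \<omega> k = \<eta> k \<longrightarrow> k0 \<le> k"
  proof (intro allI impI)
    fix k assume a: "\<omega> k = \<eta> k"
    have "nat (k0 - k1) \<le> nat (k - k1)" using k0(2) a by blast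
    moreover have "k1 < k" "k1 < k0" using lb a k0(1) by auto
    ultimately show "k0 \<le> k" by linarith
  qed
  have iff: "\<forall>k. \<omega> k = \<eta> k \<longleftrightarrow> k0 \<le> k" using min bdry_up[OF assms(1,2) k0(1)] by blast
  have "conf par r0 (range \<omega>) (range \<eta>) = \<omega> k0"
  proof (rule conf_eq)
    show "\<omega> k0 \<in> range \<omega> \<inter> range \<eta>" using k0(1) by (metis IntI rangeI)
    show "\<forall>z\<in>range \<omega> \<inter> range \<eta>. level par r0 (\<omega> k0) \<le> level par r0 z"
    proof
      fix z assume "z \<in> range \<omega> \<inter> range \<eta>"
      then have "\<omega> (level par r0 z) = z" "\<eta> (level par r0 z) = z" using bdry_range assms by blast+
      then show "level par r0 (\<omega> k0) \<le> level par r0 z" using min bdry_level[OF assms(1)] by metis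
    qed
    show "\<forall>z1\<in>range \<omega> \<inter> range \<eta>. \<forall>z2\<in>range \<omega> \<inter> range \<eta>. level par r0 z1 = level par r0 z2 \<longrightarrow> z1 = z2"
    proof (intro ballI impI)
      fix z1 z2 assume "z1 \<in> range \<omega> \<inter> range \<eta>" "z2 \<in> range \<omega> \<inter> range \<eta>" "level par r0 z1 = level par r0 z2"
      then show "z1 = z2" using bdry_range[OF assms(1), of z1] bdry_range[OF assms(1), of z2] by auto
    qed
  qed
  then have c: "conf_bb par r0 \<omega> \<eta> = \<omega> k0" unfolding conf_bb_def .
  have l: "level par r0 (\<omega> k0) = k0" by (rule bdry_level[OF assms(1)])
  show ?thesis by (rule exI[of _ k0], intro conjI c l iff)
qed

end

locale twm = tw par r0 for par :: "'v \<Rightarrow> 'v" and r0 :: 'v +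
  fixes \<nu> :: "(int \<Rightarrow> 'v) measure"
  assumes borel: "borel_on_bdry par r0 \<nu>"
    and cyl_pos: "\<forall>x. 0 < emeasure \<nu> (cyl par r0 x) \<and> emeasure \<nu> (cyl par r0 x) < \<infinity>"
begin

abbreviation "m \<equiv> m_nu par r0 \<nu>"

lemma space_nu: "space \<nu> = bdry par r0"
  using borel unfolding borel_on_bdry_def by blast

lemma cyl_sets: "cyl par r0 x \<in> sets \<nu>"
  using cyl_pos emeasure_notin_sets by (metis less_irrefl)

lemma cyl_em: "emeasure \<nu> (cyl par r0 x) = ennreal (m x)"
  unfolding m_nu_def using cyl_pos by (simp add: emeasure_eq_ennreal_measure less_top)

lemma m_pos: "0 < m x"
  using cyl_pos[rule_format, of x] cyl_em[of x] by (simp add: ennreal_less_zero_iff)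

lemma cyl_fmeas: "cyl par r0 x \<in> fmeasurable \<nu>"
  using cyl_sets cyl_pos by (simp add: fmeasurable_def)

lemma cyl_iff: "\<omega> \<in> cyl par r0 v \<longleftrightarrow> \<omega> \<in> bdry par r0 \<and> \<omega> (level par r0 v) = v"
  unfolding cyl_def using bdry_range by blast

lemma cyl_par: "cyl par r0 y \<subseteq> cyl par r0 (par y)"
proof
  fix \<omega> assume a: "\<omega> \<in> cyl par r0 y"
  then have b: "\<omega> \<in> bdry par r0" "\<omega> (level par r0 y) = y" using cyl_iff by auto
  then have "\<omega> (level par r0 (par y)) = par y" using bdry_par[OF b(1)] level_par by metis
  then show "\<omega> \<in> cyl par r0 (par y)" using cyl_iff b(1) by blast
qed

lemma cyl_pow: "cyl par r0 y \<subseteq> cyl par r0 ((par ^^ n) y)"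
proof (induction n)
  case (Suc n)
  then show ?case using cyl_par[of "(par ^^ n) y"] by simp
qed simp

lemma cyl_above: "v \<in> above par x \<Longrightarrow> cyl par r0 x \<subseteq> cyl par r0 v"
  unfolding above_iff using cyl_pow by blast

lemma cyl_disj: "level par r0 a = level par r0 b \<Longrightarrow> a \<noteq> b \<Longrightarrow> cyl par r0 a \<inter> cyl par r0 b = {}"
  using cyl_iff by auto

lemma sum_le: assumes "finite F" "\<forall>x\<in>F. level par r0 x = L \<and> cyl par r0 x \<subseteq> cyl par r0 y"
  shows "(\<Sum>x\<in>F. m x) \<le> m y"
proof -
  have disj: "disjoint_family_on (cyl par r0) F"
    unfolding disjoint_family_on_def using assms(2) cyl_disj by metis
  have "(\<Sum>x\<in>F. m x) = measure \<nu> (\<Union>x\<in>F. cyl par r0 x)"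
    unfolding m_nu_def
    using measure_finite_Union[of F "cyl par r0" \<nu>, OF assms(1) _ disj] cyl_sets cyl_pos
    by (metis image_subsetI less_irrefl top.not_eq_extremum)
  also have "\<dots> \<le> measure \<nu> (cyl par r0 y)"
    by (rule measure_mono_fmeasurable, use assms(2) in blast, use assms(1) cyl_sets in blast, rule cyl_fmeas)
  finally show ?thesis unfolding m_nu_def .
qed

lemma cyl_ne: "\<exists>\<omega>. \<omega> \<in> cyl par r0 x"
proof (rule ccontr)
  assume "\<not> ?thesis" then have "cyl par r0 x = {}" by blast
  then show False using cyl_pos[rule_format, of x] by simp
qed

lemma gromov_lt: assumes "\<omega> \<in> bdry par r0" "\<eta> \<in> bdry par r0"
  shows "gromov par r0 \<omega> \<eta> < exp (real_of_int (L + 1)) \<longleftrightarrow> \<omega> L = \<eta> L"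
    and "gromov par r0 \<omega> \<eta> < 2 * exp (real_of_int (L + 1)) \<longleftrightarrow> \<omega> (L + 1) = \<eta> (L + 1)"
proof -
  have "(gromov par r0 \<omega> \<eta> < exp (real_of_int (L + 1)) \<longleftrightarrow> \<omega> L = \<eta> L) \<and>
    (gromov par r0 \<omega> \<eta> < 2 * exp (real_of_int (L + 1)) \<longleftrightarrow> \<omega> (L + 1) = \<eta> (L + 1))"
  proof (cases "\<omega> = \<eta>")
    case True then show ?thesis unfolding gromov_def by simp
  next
    case False
    obtain k0 where k0: "conf_bb par r0 \<omega> \<eta> = \<omega> k0" "level par r0 (\<omega> k0) = k0" "\<forall>k. \<omega> k = \<eta> k \<longleftrightarrow> k0 \<le> k"
      using conf_bb_char[OF assms False] by blast
    have g: "gromov par r0 \<omega> \<eta> = exp (real_of_int k0)" unfolding gromov_def using False k0 by simp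
    have e2: "2 \<le> exp (1::real)" using exp_ge_add_one_self[of 1] by simp
    have A0: "real_of_int k0 < real_of_int (L + 1) \<longleftrightarrow> k0 < L + 1" by (rule of_int_less_iff)
    have A: "exp (real_of_int k0) < exp (real_of_int (L + 1)) \<longleftrightarrow> k0 \<le> L"
      unfolding exp_less_cancel_iff A0 by linarith
    have B: "exp (real_of_int k0) < 2 * exp (real_of_int (L + 1)) \<longleftrightarrow> k0 \<le> L + 1"
    proof
      assume "k0 \<le> L + 1"
      then have "exp (real_of_int k0) \<le> exp (real_of_int (L + 1))" by simp
      then show "exp (real_of_int k0) < 2 * exp (real_of_int (L + 1))"
        using exp_gt_zero[of "real_of_int (L+1)"] by linarith
    next
      assume h: "exp (real_of_int k0) < 2 * exp (real_of_int (L + 1))"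
      show "k0 \<le> L + 1"
      proof (rule ccontr)
        assume "\<not> k0 \<le> L + 1"
        then have "real_of_int (L + 1) + 1 \<le> real_of_int k0" by linarith
        then have "exp (real_of_int (L + 1) + 1) \<le> exp (real_of_int k0)" by simp
        moreover have "exp (real_of_int (L + 1) + 1) = exp (real_of_int (L + 1)) * exp 1" by (rule exp_add)
        moreover have "2 * exp (real_of_int (L + 1)) \<le> exp (real_of_int (L + 1)) * exp 1"
          using e2 exp_gt_zero[of "real_of_int (L+1)"] by simp
        ultimately show False using h by linarith
      qed
    qed
    show ?thesis using g A B k0(3) by simp
  qed
  then show "gromov par r0 \<omega> \<eta> < exp (real_of_int (L + 1)) \<longleftrightarrow> \<omega> L = \<eta> L"
    and "gromov par r0 \<omega> \<eta> < 2 * exp (real_of_int (L + 1)) \<longleftrightarrow> \<omega> (L + 1) = \<eta> (L + 1)" by auto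
qed

lemma ball_eq: assumes "\<omega> \<in> bdry par r0"
  shows "rho_ball par r0 \<omega> (exp (real_of_int (L + 1))) = cyl par r0 (\<omega> L)"
    and "rho_ball par r0 \<omega> (2 * exp (real_of_int (L + 1))) = cyl par r0 (\<omega> (L + 1))"
  unfolding rho_ball_def using gromov_lt[OF assms] cyl_iff bdry_level bdry_level[OF assms] by auto

lemma dbl_par: assumes "doubling par r0 \<nu>" shows "\<exists>C>0. \<forall>z. m (par z) \<le> C * m z"
proof -
  obtain C where C: "\<forall>\<omega>\<in>bdry par r0. \<forall>r. emeasure \<nu> (rho_ball par r0 \<omega> (2 * r)) \<le> ennreal C * emeasure \<nu> (rho_ball par r0 \<omega> r)"
    using assms unfolding doubling_def by blast
  have key: "ennreal (m (par z)) \<le> ennreal C * ennreal (m z)" for z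
  proof -
    obtain \<omega> where w: "\<omega> \<in> cyl par r0 z" using cyl_ne by blast
    then have wb: "\<omega> \<in> bdry par r0" and wz: "\<omega> (level par r0 z) = z" using cyl_iff by auto
    have wp: "\<omega> (level par r0 z + 1) = par z" using bdry_par[OF wb] wz by metis
    show ?thesis using C[rule_format, OF wb, of "exp (real_of_int (level par r0 z + 1))"]
      unfolding ball_eq[OF wb] wz wp cyl_em .
  qed
  have Cpos: "C > 0"
  proof (rule ccontr)
    assume "\<not> C > 0" then have "ennreal C = 0" by (simp add: ennreal_eq_0_iff)
    then show False using key[of r0] m_pos[of "par r0"] by simp
  qed
  have "m (par z) \<le> C * m z" for z
    using key[of z] Cpos m_pos[of z] by (simp add: ennreal_mult[symmetric])
  then show ?thesis using Cpos by blast
qed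

lemma q_exists: assumes "doubling par r0 \<nu>"
  and two: "\<forall>x. \<exists>y z. y \<in> successors par x \<and> z \<in> successors par x \<and> y \<noteq> z"
  shows "\<exists>q. 0 < q \<and> q < 1 \<and> (\<forall>z. m z \<le> q * m (par z))"
proof -
  obtain C where C: "C > 0" "\<forall>z. m (par z) \<le> C * m z" using dbl_par[OF assms(1)] by blast
  define q where "q = 1 - 1 / C"
  have main: "m z \<le> q * m (par z)" for z
  proof -
    obtain y1 y2 where y: "par y1 = par z" "par y2 = par z" "y1 \<noteq> y2"
      using two[rule_format, of "par z"] unfolding successors_def by blast
    obtain s where s: "par s = par z" "s \<noteq> z" using y by metis
    have ls: "level par r0 s = level par r0 z" using level_par[of s] level_par[of z] s(1) by simp
    have "(\<Sum>x\<in>{z, s}. m x) \<le> m (par z)"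
      by (rule sum_le[of _ "level par r0 z"]) (use ls s cyl_par[of s] cyl_par[of z] in auto)
    then have 1: "m z + m s \<le> m (par z)" using s(2) by simp
    have 2: "m (par z) \<le> C * m s" using C(2) s(1) by metis
    have "m (par z) / C \<le> m s" using 2 C(1) by (simp add: field_simps)
    then show ?thesis unfolding q_def using 1 C(1) by (simp add: algebra_simps)
  qed
  have q1: "q < 1" unfolding q_def using C(1) by simp
  have "0 < q * m (par r0)" using main[of r0] m_pos[of r0] by linarith
  then have "0 < q" using m_pos[of "par r0"] by (simp add: zero_less_mult_iff)
  then show ?thesis using q1 main by blast
qed

end

lemma ennreal_term_le: "(f i :: ennreal) \<le> suminf f"
  using sum_le_suminf[OF summableI, of "{i}" f] by simp

lemma geom_sum: fixes h :: "'a \<Rightarrow> real"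
  assumes "finite S" "inj_on f S" "\<forall>k\<in>S. h k \<le> r ^ f k" "0 \<le> r" "r < 1"
  shows "sum h S \<le> 1 / (1 - r)"
proof -
  have "sum h S \<le> (\<Sum>k\<in>S. r ^ f k)" by (rule sum_mono) (use assms(3) in blast)
  also have "\<dots> = (\<Sum>i\<in>f ` S. r ^ i)" by (rule sum.reindex[symmetric, unfolded comp_def], rule assms(2))
  also have "\<dots> \<le> (\<Sum>i. r ^ i)"
    by (rule sum_le_suminf) (use assms in \<open>auto intro: summable_geometric\<close>)
  also have "\<dots> = 1 / (1 - r)" by (rule suminf_geometric) (use assms in simp)
  finally show ?thesis .
qed

locale twq = twm par r0 \<nu> for par :: "'v \<Rightarrow> 'v" and r0 :: 'v and \<nu> :: "(int \<Rightarrow> 'v) measure" +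
  fixes q \<alpha> :: real
  assumes q0: "0 < q" and q1: "q < 1" and qm: "\<forall>z. m z \<le> q * m (par z)" and \<alpha>0: "0 < \<alpha>"
begin

definition "Q = q powr \<alpha>"

lemma Q0: "0 < Q" and Q1: "Q < 1"
  unfolding Q_def using q0 powr_less_mono2[OF \<alpha>0 _ q1] by auto

lemma m_pow: "m x \<le> q ^ n * m ((par ^^ n) x)"
proof (induction n)
  case (Suc n)
  have "m ((par ^^ n) x) \<le> q * m ((par ^^ Suc n) x)" using qm by simp
  then have "q ^ n * m ((par ^^ n) x) \<le> q ^ n * (q * m ((par ^^ Suc n) x))"
    using q0 by (simp add: mult_left_mono)
  then show ?case using Suc by (simp add: algebra_simps)
qed simp

lemma mpowr_par: "m x powr \<alpha> \<le> Q * m (par x) powr \<alpha>"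
proof -
  have "m x powr \<alpha> \<le> (q * m (par x)) powr \<alpha>"
    by (rule powr_mono2) (use \<alpha>0 m_pos[of x] qm in auto)
  also have "\<dots> = Q * m (par x) powr \<alpha>" unfolding Q_def by (rule powr_mult)
  finally show ?thesis .
qed

lemma mpowr_pow: "m x powr \<alpha> \<le> Q ^ n * m ((par ^^ n) x) powr \<alpha>"
proof (induction n)
  case (Suc n)
  have "m ((par ^^ n) x) powr \<alpha> \<le> Q * m ((par ^^ Suc n) x) powr \<alpha>" using mpowr_par by simp
  then have "Q ^ n * m ((par ^^ n) x) powr \<alpha> \<le> Q ^ n * (Q * m ((par ^^ Suc n) x) powr \<alpha>)"
    using Q0 by (simp add: mult_left_mono)
  then show ?case using Suc by (simp add: algebra_simps)
qed simp

lemma M_mono: assumes "\<omega> \<in> bdry par r0" shows "m (\<omega> k) \<le> q ^ n * m (\<omega> (k + int n))"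
  using m_pow[of "\<omega> k" n] bdry_shift[OF assms] by simp

lemma G_sum: assumes w: "\<omega> \<in> bdry par r0" and S: "finite S"
  shows "(\<Sum>k\<in>S. min (1 / m (\<omega> k)) (m (\<omega> k))) \<le> 2 / (1 - q)"
proof -
  define G where "G k = min (1 / m (\<omega> k)) (m (\<omega> k))" for k
  define S1 where "S1 = {k\<in>S. m (\<omega> k) \<le> 1}"
  define S2 where "S2 = {k\<in>S. \<not> m (\<omega> k) \<le> 1}"
  have fin: "finite S1" "finite S2" unfolding S1_def S2_def using S by auto
  have split: "sum G S = sum G S1 + sum G S2"
  proof -
    have "S = S1 \<union> S2" "S1 \<inter> S2 = {}" unfolding S1_def S2_def by auto
    then show ?thesis using sum.union_disjoint[OF fin] by simp
  qed
  have b1: "sum G S1 \<le> 1 / (1 - q)"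
  proof (cases "S1 = {}")
    case True then show ?thesis using q1 by simp
  next
    case False
    define k1 where "k1 = Max S1"
    have k1: "k1 \<in> S1" "\<forall>k\<in>S1. k \<le> k1" unfolding k1_def using fin(1) False by auto
    show ?thesis
    proof (rule geom_sum[OF fin(1), of "\<lambda>k. nat (k1 - k)"])
      show "inj_on (\<lambda>k. nat (k1 - k)) S1"
      proof (rule inj_onI)
        fix x y assume "x \<in> S1" "y \<in> S1" "nat (k1 - x) = nat (k1 - y)"
        then show "x = y" using k1(2) eq_nat_nat_iff[of "k1 - x" "k1 - y"] by auto
      qed
      show "\<forall>k\<in>S1. G k \<le> q ^ nat (k1 - k)"
      proof
        fix k assume k: "k \<in> S1"
        have "m (\<omega> k) \<le> q ^ nat (k1 - k) * m (\<omega> (k + int (nat (k1 - k))))" by (rule M_mono[OF w])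
        also have "k + int (nat (k1 - k)) = k1" using k k1 by simp
        finally have "m (\<omega> k) \<le> q ^ nat (k1 - k) * m (\<omega> k1)" .
        also have "\<dots> \<le> q ^ nat (k1 - k)" using k1(1) q0 unfolding S1_def
          by (simp add: mult_left_le)
        finally show "G k \<le> q ^ nat (k1 - k)" unfolding G_def by linarith
      qed
    qed (use q0 q1 in auto)
  qed
  have b2: "sum G S2 \<le> 1 / (1 - q)"
  proof (cases "S2 = {}")
    case True then show ?thesis using q1 by simp
  next
    case False
    define k2 where "k2 = Min S2"
    have k2: "k2 \<in> S2" "\<forall>k\<in>S2. k2 \<le> k" unfolding k2_def using fin(2) False by auto
    show ?thesis
    proof (rule geom_sum[OF fin(2), of "\<lambda>k. nat (k - k2)"])
      show "inj_on (\<lambda>k. nat (k - k2)) S2"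
      proof (rule inj_onI)
        fix x y assume "x \<in> S2" "y \<in> S2" "nat (x - k2) = nat (y - k2)"
        then show "x = y" using k2(2) eq_nat_nat_iff[of "x - k2" "y - k2"] by auto
      qed
      show "\<forall>k\<in>S2. G k \<le> q ^ nat (k - k2)"
      proof
        fix k assume k: "k \<in> S2"
        have "m (\<omega> k2) \<le> q ^ nat (k - k2) * m (\<omega> (k2 + int (nat (k - k2))))" by (rule M_mono[OF w])
        also have "k2 + int (nat (k - k2)) = k" using k k2 by simp
        finally have a: "m (\<omega> k2) \<le> q ^ nat (k - k2) * m (\<omega> k)" .
        have p: "0 < m (\<omega> k)" "1 < m (\<omega> k2)" using m_pos k2(1) unfolding S2_def by auto
        have "1 \<le> q ^ nat (k - k2) * m (\<omega> k)" using a p by linarith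
        then have "1 / m (\<omega> k) \<le> q ^ nat (k - k2)" using p by (simp add: divide_le_eq mult.commute)
        then show "G k \<le> q ^ nat (k - k2)" unfolding G_def by linarith
      qed
    qed (use q0 q1 in auto)
  qed
  have "sum G S \<le> 2 / (1 - q)" using split b1 b2 by (simp add: field_simps)
  then show ?thesis unfolding G_def .
qed


lemma conf_facts: fixes x assumes w: "\<omega> \<in> bdry par r0"
  defines "k \<equiv> level par r0 (conf_vb par r0 x \<omega>)"
  shows "conf_vb par r0 x \<omega> = \<omega> k" "level par r0 x \<le> k"
    "conf_vb par r0 x \<omega> = (par ^^ nat (k - level par r0 x)) x"
    "cyl par r0 x \<subseteq> cyl par r0 (\<omega> k)"
    "\<omega> \<in> cyl par r0 (conf_vb par r0 x \<omega>)"
proof -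
  obtain k0 where k0: "conf_vb par r0 x \<omega> = \<omega> k0" "\<omega> k0 \<in> above par x"
    using conf_vb_char[OF w] by blast
  have kk: "k = k0" unfolding k_def k0(1) by (rule bdry_level[OF w])
  show c: "conf_vb par r0 x \<omega> = \<omega> k" using k0 kk by simp
  show "level par r0 x \<le> k" "conf_vb par r0 x \<omega> = (par ^^ nat (k - level par r0 x)) x"
    using above_pow[OF k0(2)] bdry_level[OF w] k0 kk by auto
  show "cyl par r0 x \<subseteq> cyl par r0 (\<omega> k)" using cyl_above k0 kk by simp
  show "\<omega> \<in> cyl par r0 (conf_vb par r0 x \<omega>)" using c cyl_iff w bdry_level[OF w] by simp
qed

lemma fin_sum: assumes w: "\<omega> \<in> bdry par r0" and F: "finite F"
  and fb: "\<forall>x\<in>F. f x \<le> m x powr \<alpha> / m (conf_vb par r0 x \<omega>) powr (\<alpha> + 1)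
      * min (1 / m (conf_vb par r0 x \<omega>)) (m (conf_vb par r0 x \<omega>)) * m x"
  shows "sum f F \<le> 1 / (1 - Q) * (2 / (1 - q))"
proof -
  define M where "M k = m (\<omega> k)" for k
  define G where "G k = min (1 / M k) (M k)" for k
  define kk where "kk x = level par r0 (conf_vb par r0 x \<omega>)" for x
  define jj where "jj x = nat (kk x - level par r0 x)" for x
  define h where "h x = Q ^ jj x * G (kk x) / M (kk x) * m x" for x
  define p where "p x = (kk x, jj x)" for x
  have Mpos: "0 < M k" for k unfolding M_def by (rule m_pos)
  have Gnn: "0 \<le> G k" for k unfolding G_def using Mpos[of k] by simp
  have fh: "f x \<le> h x" if x: "x \<in> F" for x
  proof -
    note cf = conf_facts[OF w, of x, folded kk_def, folded jj_def]
    have pw: "m x powr \<alpha> \<le> Q ^ jj x * M (kk x) powr \<alpha>"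
      using mpowr_pow[of x "jj x"] cf(3) cf(1) unfolding M_def by simp
    have e: "M (kk x) powr (\<alpha> + 1) = M (kk x) powr \<alpha> * M (kk x)"
      using Mpos[of "kk x"] by (simp add: powr_add)
    have pp: "0 < M (kk x) powr \<alpha>" using Mpos[of "kk x"] by simp
    have "m x powr \<alpha> / M (kk x) powr (\<alpha> + 1) \<le> Q ^ jj x * M (kk x) powr \<alpha> / (M (kk x) powr \<alpha> * M (kk x))"
      unfolding e by (rule divide_right_mono[OF pw]) (use pp Mpos[of "kk x"] in simp)
    also have "\<dots> = Q ^ jj x / M (kk x)" using pp by simp
    finally have 1: "m x powr \<alpha> / M (kk x) powr (\<alpha> + 1) \<le> Q ^ jj x / M (kk x)" .
    have "f x \<le> m x powr \<alpha> / M (kk x) powr (\<alpha> + 1) * G (kk x) * m x"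
      using fb[rule_format, OF x] unfolding cf(1) M_def G_def by simp
    also have "\<dots> = (m x powr \<alpha> / M (kk x) powr (\<alpha> + 1)) * (G (kk x) * m x)"
      by (simp only: mult.assoc)
    also have "\<dots> \<le> (Q ^ jj x / M (kk x)) * (G (kk x) * m x)"
      by (rule mult_right_mono[OF 1]) (use Gnn[of "kk x"] m_pos[of x] in simp)
    also have "\<dots> = h x" unfolding h_def by simp
    finally show ?thesis .
  qed
  have "sum f F \<le> sum h F" using fh by (rule sum_mono)
  also have "\<dots> = (\<Sum>pr\<in>p ` F. sum h {x\<in>F. p x = pr})" by (rule sum.image_gen[OF F])
  also have "\<dots> \<le> (\<Sum>pr\<in>p ` F. Q ^ snd pr * G (fst pr))"
  proof (rule sum_mono)
    fix pr assume "pr \<in> p ` F"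
    obtain k j where pr: "pr = (k, j)" by (cases pr)
    define Fp where "Fp = {x\<in>F. p x = pr}"
    have Fp: "finite Fp" using F unfolding Fp_def by simp
    have s1: "(\<Sum>x\<in>Fp. m x) \<le> m (\<omega> k)"
    proof (rule sum_le[OF Fp, of "k - int j"], intro ballI conjI)
      fix x assume "x \<in> Fp"
      then have kj: "kk x = k" "jj x = j" unfolding Fp_def p_def pr by auto
      note cf = conf_facts[OF w, of x, folded kk_def]
      show "level par r0 x = k - int j" using cf(2) kj unfolding jj_def by auto
      show "cyl par r0 x \<subseteq> cyl par r0 (\<omega> k)" using cf(4) kj by simp
    qed
    have s2: "sum h Fp = Q ^ j * G k / M k * (\<Sum>x\<in>Fp. m x)"
      unfolding h_def sum_distrib_left
      by (rule sum.cong) (auto simp: Fp_def p_def pr)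
    have c0: "0 \<le> Q ^ j * G k / M k" using Q0 Gnn[of k] Mpos[of k] by simp
    have "sum h Fp \<le> Q ^ j * G k / M k * M k"
      unfolding s2 by (rule mult_left_mono[OF _ c0]) (use s1 in \<open>simp add: M_def\<close>)
    also have "\<dots> = Q ^ j * G k" using Mpos[of k] by simp
    finally show "sum h {x\<in>F. p x = pr} \<le> Q ^ snd pr * G (fst pr)" unfolding Fp_def pr by simp
  qed
  also have "\<dots> \<le> (\<Sum>pr\<in>fst ` p ` F \<times> snd ` p ` F. Q ^ snd pr * G (fst pr))"
  proof (rule sum_mono2)
    show "p ` F \<subseteq> fst ` p ` F \<times> snd ` p ` F"
    proof
      fix z assume z: "z \<in> p ` F"
      have "fst z \<in> fst ` p ` F" "snd z \<in> snd ` p ` F" using imageI[OF z, of fst] imageI[OF z, of snd] by auto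
      then show "z \<in> fst ` p ` F \<times> snd ` p ` F" by (simp add: mem_Times_iff)
    qed
  qed (use F Q0 Gnn in \<open>auto intro: mult_nonneg_nonneg\<close>)
  also have "\<dots> = (\<Sum>k\<in>fst ` p ` F. G k) * (\<Sum>j\<in>snd ` p ` F. Q ^ j)"
    unfolding sum.cartesian_product' sum_product by (simp add: mult.commute)
  also have "\<dots> \<le> (2 / (1 - q)) * (1 / (1 - Q))"
  proof (rule mult_mono)
    show "(\<Sum>k\<in>fst ` p ` F. G k) \<le> 2 / (1 - q)" unfolding G_def M_def
      by (rule G_sum[OF w]) (use F in simp)
    show "(\<Sum>j\<in>snd ` p ` F. Q ^ j) \<le> 1 / (1 - Q)"
      by (rule geom_sum[of _ id]) (use F Q0 Q1 in auto)
    show "0 \<le> 2 / (1 - q)" using q1 by simp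
    show "0 \<le> (\<Sum>j\<in>snd ` p ` F. Q ^ j)" using Q0 by (simp add: sum_nonneg)
  qed
  finally show ?thesis by (simp add: mult.commute)
qed

lemma integrable_K: assumes meas: "f \<in> borel_measurable \<nu>"
  and fb: "\<forall>\<omega>\<in>bdry par r0. cmod (f \<omega>) \<le> m x powr \<alpha> / m (conf_vb par r0 x \<omega>) powr (\<alpha> + 1)"
  shows "integrable \<nu> f"
proof (rule integrableI_bounded[OF meas])
  define c where "c n = m x powr \<alpha> / m ((par ^^ n) x) powr (\<alpha> + 1)" for n
  define A where "A n = cyl par r0 ((par ^^ n) x)" for n
  have pt: "ennreal (norm (f \<omega>)) \<le> (\<Sum>n. ennreal (c n) * indicator (A n) \<omega>)" if "\<omega> \<in> space \<nu>" for \<omega>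
  proof -
    have w: "\<omega> \<in> bdry par r0" using that space_nu by simp
    define n0 where "n0 = nat (level par r0 (conf_vb par r0 x \<omega>) - level par r0 x)"
    note cf = conf_facts[OF w, of x, folded n0_def]
    have inA: "\<omega> \<in> A n0" unfolding A_def using cf(5) cf(3) by simp
    have "ennreal (norm (f \<omega>)) \<le> ennreal (c n0)"
      using fb[rule_format, OF w] unfolding cf(3) c_def by (simp add: ennreal_leI)
    also have "\<dots> = ennreal (c n0) * indicator (A n0) \<omega>" using inA by simp
    also have "\<dots> \<le> (\<Sum>n. ennreal (c n) * indicator (A n) \<omega>)"
      by (rule ennreal_term_le)
    finally show ?thesis .
  qed
  have Ameas: "A n \<in> sets \<nu>" for n unfolding A_def by (rule cyl_sets)
  have meas_n: "(\<lambda>\<omega>. ennreal (c n) * indicator (A n) \<omega>) \<in> borel_measurable \<nu>" for n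
    using Ameas[of n] by simp
  have cn: "c n * m ((par ^^ n) x) \<le> Q ^ n" for n
  proof -
    let ?M = "m ((par ^^ n) x)"
    have Mp: "0 < ?M" by (rule m_pos)
    have pp: "0 < ?M powr \<alpha>" using Mp by simp
    have "c n * ?M = m x powr \<alpha> / ?M powr \<alpha>"
      unfolding c_def using Mp pp by (simp add: powr_add field_simps)
    also have "\<dots> \<le> Q ^ n" using mpowr_pow[of x n] pp by (simp add: divide_le_eq)
    finally show ?thesis .
  qed
  have "(\<integral>\<^sup>+\<omega>. ennreal (norm (f \<omega>)) \<partial>\<nu>) \<le> (\<integral>\<^sup>+\<omega>. (\<Sum>n. ennreal (c n) * indicator (A n) \<omega>) \<partial>\<nu>)"
    by (rule nn_integral_mono) (rule pt)
  also have "\<dots> = (\<Sum>n. \<integral>\<^sup>+\<omega>. ennreal (c n) * indicator (A n) \<omega> \<partial>\<nu>)"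
    by (rule nn_integral_suminf) (rule meas_n)
  also have "\<dots> = (\<Sum>n. ennreal (c n) * emeasure \<nu> (A n))"
    using nn_integral_cmult_indicator[OF Ameas] by simp
  also have "\<dots> = (\<Sum>n. ennreal (c n * m ((par ^^ n) x)))"
    unfolding A_def cyl_em by (subst ennreal_mult) (auto simp: c_def m_pos less_imp_le)
  also have "\<dots> \<le> (\<Sum>n. ennreal (Q ^ n))"
    by (rule suminf_le) (auto intro: ennreal_leI cn)
  also have "\<dots> = ennreal (\<Sum>n. Q ^ n)"
    by (rule suminf_ennreal2) (use Q0 Q1 in \<open>auto intro: summable_geometric\<close>)
  also have "\<dots> < \<infinity>" by simp
  finally show "(\<integral>\<^sup>+\<omega>. ennreal (norm (f \<omega>)) \<partial>\<nu>) < \<infinity>" .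
qed


lemma min_facts: assumes "0 < t" "0 < (\<delta>::real)"
  shows "0 < min (1 / t) t" "min (1 / t) t \<le> 1" "min (1 / t) t powr (1 + \<delta>) \<le> min (1 / t) t"
proof -
  show p: "0 < min (1 / t) t" using assms by simp
  show l: "min (1 / t) t \<le> 1"
  proof (cases "t \<le> 1")
    case True then show ?thesis by simp
  next
    case False then have "1 / t \<le> 1" by simp
    then show ?thesis by simp
  qed
  have "min (1 / t) t powr (1 + \<delta>) \<le> min (1 / t) t powr 1"
    by (rule powr_mono') (use assms p l in auto)
  then show "min (1 / t) t powr (1 + \<delta>) \<le> min (1 / t) t" using p by simp
qed

lemma part1: assumes \<delta>: "0 < \<delta>" and meas: "\<forall>x. K x \<in> borel_measurable \<nu>"
  and sb: "strong_bound par r0 \<nu> \<alpha> \<delta> K"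
  shows "cond_A3_with par r0 \<nu> \<alpha> K \<and>
            (\<forall>\<omega>\<in>bdry par r0. (\<lambda>x. cmod (K x \<omega>) * m x) summable_on UNIV \<and>
                 (\<Sum>\<^sub>\<infinity>x. cmod (K x \<omega>) * m x) \<le> 1 / (1 - Q) * (2 / (1 - q))) \<and>
            cond_A2 par r0 \<nu> K \<and>
            (\<forall>x. integrable \<nu> (K x))"
proof -
  have sb': "cmod (K x \<omega>) \<le> m x powr \<alpha> / m (conf_vb par r0 x \<omega>) powr (\<alpha> + 1)
        * (min (1 / m (conf_vb par r0 x \<omega>)) (m (conf_vb par r0 x \<omega>))) powr (1 + \<delta>)"
    if "\<omega> \<in> bdry par r0" for x \<omega> using sb that unfolding strong_bound_def by blast
  have A3': "cmod (K x \<omega>) \<le> m x powr \<alpha> / m (conf_vb par r0 x \<omega>) powr (\<alpha> + 1)"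
    if w: "\<omega> \<in> bdry par r0" for x \<omega>
  proof -
    let ?y = "conf_vb par r0 x \<omega>"
    note mf = min_facts[OF m_pos[of ?y] \<delta>]
    have nn: "0 \<le> m x powr \<alpha> / m ?y powr (\<alpha> + 1)" by simp
    have "m x powr \<alpha> / m ?y powr (\<alpha> + 1) * (min (1 / m ?y) (m ?y)) powr (1 + \<delta>)
        \<le> m x powr \<alpha> / m ?y powr (\<alpha> + 1) * 1"
      by (rule mult_left_mono[OF _ nn]) (use mf in linarith)
    then show ?thesis using sb'[OF w, of x] by simp
  qed
  have A3: "cond_A3_with par r0 \<nu> \<alpha> K" unfolding cond_A3_with_def using A3' by blast
  have sums: "(\<lambda>x. cmod (K x \<omega>) * m x) summable_on UNIV \<and>
                 (\<Sum>\<^sub>\<infinity>x. cmod (K x \<omega>) * m x) \<le> 1 / (1 - Q) * (2 / (1 - q))"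
    if w: "\<omega> \<in> bdry par r0" for \<omega>
  proof -
    define f where "f x = cmod (K x \<omega>) * m x" for x
    have fb: "\<forall>x\<in>F. f x \<le> m x powr \<alpha> / m (conf_vb par r0 x \<omega>) powr (\<alpha> + 1)
      * min (1 / m (conf_vb par r0 x \<omega>)) (m (conf_vb par r0 x \<omega>)) * m x" for F
    proof
      fix x
      let ?y = "conf_vb par r0 x \<omega>"
      note mf = min_facts[OF m_pos[of ?y] \<delta>]
      have nn: "0 \<le> m x powr \<alpha> / m ?y powr (\<alpha> + 1)" by simp
      have "cmod (K x \<omega>) \<le> m x powr \<alpha> / m ?y powr (\<alpha> + 1) * min (1 / m ?y) (m ?y)"
        using sb'[OF w, of x] mult_left_mono[OF mf(3) nn] by linarith
      then show "f x \<le> m x powr \<alpha> / m ?y powr (\<alpha> + 1) * min (1 / m ?y) (m ?y) * m x"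
        unfolding f_def by (rule mult_right_mono) (use m_pos[of x] in simp)
    qed
    have fs: "sum f F \<le> 1 / (1 - Q) * (2 / (1 - q))" if "finite F" for F
      by (rule fin_sum[OF w that fb])
    have fnn: "0 \<le> f x" for x unfolding f_def using m_pos[of x] by simp
    have summ: "f summable_on UNIV"
      by (rule nonneg_bdd_above_summable_on) (use fnn fs in \<open>auto intro!: bdd_aboveI\<close>)
    have "infsum f UNIV \<le> 1 / (1 - Q) * (2 / (1 - q))"
      by (rule infsum_le_finite_sums[OF summ]) (use fs in auto)
    then show ?thesis using summ unfolding f_def by simp
  qed
  have A2: "cond_A2 par r0 \<nu> K" unfolding cond_A2_def
    by (rule exI[of _ "1 / (1 - Q) * (2 / (1 - q))"], rule AE_I2) (use sums space_nu in simp)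
  have int: "integrable \<nu> (K x)" for x
    by (rule integrable_K) (use meas A3' in auto)
  show ?thesis using A3 sums A2 int by blast
qed

lemma conf_child: assumes w: "\<omega> \<in> cyl par r0 a" shows "conf_vb par r0 (par a) \<omega> = par a"
proof -
  have wb: "\<omega> \<in> bdry par r0" and wa: "\<omega> (level par r0 a) = a" using w cyl_iff by auto
  have wp: "\<omega> (level par r0 (par a)) = par a" using bdry_par[OF wb, of "level par r0 a"] wa level_par by metis
  obtain k0 where k0: "conf_vb par r0 (par a) \<omega> = \<omega> k0" "\<omega> k0 \<in> above par (par a)"
    "\<forall>k. \<omega> k \<in> above par (par a) \<longrightarrow> k0 \<le> k"
    using conf_vb_char[OF wb] by blast
  have "par a \<in> above par (par a)" unfolding above_iff by (rule exI[of _ 0]) simp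
  then have "k0 \<le> level par r0 (par a)" using k0(3) wp by metis
  moreover have "level par r0 (par a) \<le> k0" using above_pow[OF k0(2)] bdry_level[OF wb] by simp
  ultimately have "k0 = level par r0 (par a)" by simp
  then show ?thesis using k0(1) wp by simp
qed

end

theorem mainTheorem9:
  fixes par :: "'v \<Rightarrow> 'v" and r0 :: 'v and \<nu> :: "(int \<Rightarrow> 'v) measure"
    and \<alpha> \<delta> :: real
  assumes tree: "tree_with_end par"
    and two_succ: "\<forall>x. \<exists>y z. y \<in> successors par x \<and> z \<in> successors par x \<and> y \<noteq> z"
    and borel: "borel_on_bdry par r0 \<nu>"
    and cyl_pos: "\<forall>x. 0 < emeasure \<nu> (cyl par r0 x) \<and> emeasure \<nu> (cyl par r0 x) < \<infinity>"
    and dbl: "doubling par r0 \<nu>"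
    and \<alpha>: "\<alpha> > 0" and \<delta>: "\<delta> > 0"
  shows "(\<exists>C::real. \<forall>K. (\<forall>x. K x \<in> borel_measurable \<nu>) \<and> strong_bound par r0 \<nu> \<alpha> \<delta> K \<longrightarrow>
            cond_A3_with par r0 \<nu> \<alpha> K \<and>
            (\<forall>\<omega>\<in>bdry par r0. (\<lambda>x. cmod (K x \<omega>) * m_nu par r0 \<nu> x) summable_on UNIV \<and>
                 (\<Sum>\<^sub>\<infinity>x. cmod (K x \<omega>) * m_nu par r0 \<nu> x) \<le> C) \<and>
            cond_A2 par r0 \<nu> K \<and>
            (\<forall>x. integrable \<nu> (K x)))
       \<and> (\<exists>K. (\<forall>x. K x \<in> borel_measurable \<nu>) \<and> strong_bound par r0 \<nu> \<alpha> \<delta> K \<and>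
            (\<exists>x. \<not> (AE \<omega> in \<nu>. K x \<omega> = 0)) \<and>
            (\<forall>x. (\<integral>\<omega>. K x \<omega> \<partial>\<nu>) = 0) \<and>
            class_O par r0 \<nu> K)"
proof -
  interpret tw par r0 using tree by unfold_locales
  interpret twm par r0 \<nu> using borel cyl_pos by unfold_locales
  obtain q where q: "0 < q" "q < 1" "\<forall>z. m z \<le> q * m (par z)" using q_exists[OF dbl two_succ] by blast
  interpret twq par r0 \<nu> q \<alpha> using q \<alpha> by unfold_locales
  have P1: "\<forall>K. (\<forall>x. K x \<in> borel_measurable \<nu>) \<and> strong_bound par r0 \<nu> \<alpha> \<delta> K \<longrightarrow>
            cond_A3_with par r0 \<nu> \<alpha> K \<and>
            (\<forall>\<omega>\<in>bdry par r0. (\<lambda>x. cmod (K x \<omega>) * m_nu par r0 \<nu> x) summable_on UNIV \<and>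
                 (\<Sum>\<^sub>\<infinity>x. cmod (K x \<omega>) * m_nu par r0 \<nu> x) \<le> 1 / (1 - Q) * (2 / (1 - q))) \<and>
            cond_A2 par r0 \<nu> K \<and>
            (\<forall>x. integrable \<nu> (K x))"
    using part1[OF \<delta>] by blast
  obtain a b where ab: "par a = r0" "par b = r0" "a \<noteq> b"
    using two_succ[rule_format, of r0] unfolding successors_def by blast
  have lab: "level par r0 a = level par r0 b" using level_par[of a] level_par[of b] ab by simp
  have disj: "cyl par r0 a \<inter> cyl par r0 b = {}" by (rule cyl_disj[OF lab ab(3)])
  define B where "B = m r0 powr \<alpha> / m r0 powr (\<alpha> + 1) * min (1 / m r0) (m r0) powr (1 + \<delta>)"
  have Bpos: "0 < B"
  proof -
    have p1: "0 < m r0 powr \<alpha>" "0 < m r0 powr (\<alpha> + 1)" using m_pos[of r0] by auto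
    have p2: "0 < min (1 / m r0) (m r0) powr (1 + \<delta>)"
      using min_facts(1)[OF m_pos[of r0] \<delta>] by (simp only: powr_gt_zero)
    show ?thesis unfolding B_def using p1 p2 by (intro mult_pos_pos divide_pos_pos)
  qed
  define c where "c = B * min (m a) (m b)"
  have cpos: "0 < c" unfolding c_def using Bpos m_pos[of a] m_pos[of b] by simp
  have ca: "c / m a \<le> B" "c / m b \<le> B" unfolding c_def using Bpos m_pos[of a] m_pos[of b]
    by (auto simp: divide_le_eq mult_left_mono)
  define g where "g \<omega> = c / m a * indicator (cyl par r0 a) \<omega> - c / m b * indicator (cyl par r0 b) \<omega>" for \<omega>
  define K where "K x \<omega> = (if x = r0 then complex_of_real (g \<omega>) else 0)" for x \<omega>
  have gmeas: "g \<in> borel_measurable \<nu>" unfolding g_def using cyl_sets[of a] cyl_sets[of b] by measurable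
  have Kmeas: "\<forall>x. K x \<in> borel_measurable \<nu>" unfolding K_def using gmeas by simp
  have gbd: "\<bar>g \<omega>\<bar> \<le> B" for \<omega>
    using disj ca cpos Bpos m_pos[of a] m_pos[of b] unfolding g_def indicator_def by auto
  have sb: "strong_bound par r0 \<nu> \<alpha> \<delta> K" unfolding strong_bound_def
  proof (intro allI ballI)
    fix x \<omega> assume w: "\<omega> \<in> bdry par r0"
    let ?y = "conf_vb par r0 x \<omega>"
    show "cmod (K x \<omega>) \<le> m x powr \<alpha> / m ?y powr (\<alpha> + 1) * min (1 / m ?y) (m ?y) powr (1 + \<delta>)"
    proof (cases "x = r0 \<and> (\<omega> \<in> cyl par r0 a \<or> \<omega> \<in> cyl par r0 b)")
      case True
      then have "?y = r0" using conf_child ab by metis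
      then show ?thesis using True gbd[of \<omega>] unfolding K_def B_def by simp
    next
      case False
      then have "K x \<omega> = 0" unfolding K_def g_def by auto
      then show ?thesis by simp
    qed
  qed
  have notAE: "\<not> (AE \<omega> in \<nu>. K r0 \<omega> = 0)"
  proof
    assume "AE \<omega> in \<nu>. K r0 \<omega> = 0"
    then obtain N where N: "{\<omega> \<in> space \<nu>. \<not> K r0 \<omega> = 0} \<subseteq> N" "emeasure \<nu> N = 0" "N \<in> sets \<nu>"
      by (rule AE_E)
    have "cyl par r0 a \<subseteq> {\<omega> \<in> space \<nu>. \<not> K r0 \<omega> = 0}"
    proof
      fix \<omega> assume w: "\<omega> \<in> cyl par r0 a"
      then have "\<omega> \<notin> cyl par r0 b" using disj by blast
      then have "K r0 \<omega> = complex_of_real (c / m a)" unfolding K_def g_def using w by simp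
      moreover have "c / m a \<noteq> 0" using cpos m_pos[of a] by simp
      moreover have "\<omega> \<in> space \<nu>" using w space_nu cyl_iff by blast
      ultimately show "\<omega> \<in> {\<omega> \<in> space \<nu>. \<not> K r0 \<omega> = 0}" by simp
    qed
    then have "emeasure \<nu> (cyl par r0 a) \<le> emeasure \<nu> N" using N by (intro emeasure_mono) auto
    then show False using N(2) cyl_pos[rule_format, of a] by simp
  qed
  have gint: "has_bochner_integral \<nu> g (c / m a * m a - c / m b * m b)"
    unfolding g_def m_nu_def
    by (intro has_bochner_integral_diff has_bochner_integral_mult_right has_bochner_integral_real_indicator cyl_sets)
       (use cyl_pos in auto)
  have "integral\<^sup>L \<nu> g = 0" using has_bochner_integral_integral_eq[OF gint] m_pos[of a] m_pos[of b] by simp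
  note g0 = this
  have Kint: "\<forall>x. (\<integral>\<omega>. K x \<omega> \<partial>\<nu>) = 0"
  proof
    fix x show "(\<integral>\<omega>. K x \<omega> \<partial>\<nu>) = 0"
    proof (cases "x = r0")
      case True
      then have "(\<integral>\<omega>. K x \<omega> \<partial>\<nu>) = (\<integral>\<omega>. complex_of_real (g \<omega>) \<partial>\<nu>)" unfolding K_def by simp
      also have "\<dots> = complex_of_real (integral\<^sup>L \<nu> g)" by (rule integral_complex_of_real)
      finally show ?thesis using g0 by simp
    next
      case False then show ?thesis unfolding K_def by simp
    qed
  qed
  have cO: "class_O par r0 \<nu> K"
    unfolding class_O_def cond_A1_def using P1 Kmeas sb Kint \<alpha> by blast
  show ?thesis
    using P1 Kmeas sb notAE Kint cO by blast
qed

end
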